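(* Let $\tau$ be an infinite cardinal and $X$ a space with $\chi(X)\le\tau$. There is no continuous, effective and transitive action on $X$ of a topological group $G$ with $\psi(G)>\tau$ and $\mathrm{inv}(G)\le\tau$.
   Context: All spaces are Tychonoff. An action of $G$ on $X$ is effective if the only $g\in G$ with $gx=x$ for all $x\in X$ is the unit, and transitive if $Gx=X$. $\psi(G)$ is the pseudocharacter of $G$. The invariance number $\mathrm{inv}(G)$ is the least infinite cardinal $\tau$ such that for every neighborhood $U$ of the unit there is a family $\gamma$ of at most $\tau$ neighborhoods of the unit such that for each $x\in G$ some $V\in\gamma$ satisfies $xVx^{-1}\subset U$. *)

theory Defs
  imports "HOL-Analysis.Analysis" "HOL-Algebra.Group" "HOL-Library.Equipollence"
begin

text \<open>Cardinals: an infinite cardinal tau is represented by an infinite set K of cardinality tau;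
  "a family has at most tau members" is rendered as \<open>F \<lesssim> K\<close>.\<close>

definition tychonoff_space :: "'a topology \<Rightarrow> bool" where
  "tychonoff_space T \<longleftrightarrow> completely_regular_space T \<and> t1_space T"

definition topological_group :: "('a, 'b) monoid_scheme \<Rightarrow> 'a topology \<Rightarrow> bool" where
  "topological_group G T \<longleftrightarrow> group G \<and> topspace T = carrier G
     \<and> continuous_map (prod_topology T T) T (\<lambda>p. fst p \<otimes>\<^bsub>G\<^esub> snd p)
     \<and> continuous_map T T (\<lambda>x. inv\<^bsub>G\<^esub> x)"

definition character_le :: "'a topology \<Rightarrow> 'k set \<Rightarrow> bool" where
  "character_le T K \<longleftrightarrow> (\<forall>x\<in>topspace T. \<exists>\<B>. \<B> \<lesssim> K \<and> (\<forall>V\<in>\<B>. openin T V \<and> x \<in> V)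
      \<and> (\<forall>U. openin T U \<and> x \<in> U \<longrightarrow> (\<exists>V\<in>\<B>. V \<subseteq> U)))"

definition pseudocharacter_le :: "'a topology \<Rightarrow> 'k set \<Rightarrow> bool" where
  "pseudocharacter_le T K \<longleftrightarrow> (\<forall>x\<in>topspace T. \<exists>\<gamma>. \<gamma> \<lesssim> K \<and> (\<forall>V\<in>\<gamma>. openin T V \<and> x \<in> V)
      \<and> topspace T \<inter> \<Inter>\<gamma> = {x})"

definition invariance_le :: "('a, 'b) monoid_scheme \<Rightarrow> 'a topology \<Rightarrow> 'k set \<Rightarrow> bool" where
  "invariance_le G T K \<longleftrightarrow> (\<forall>U. openin T U \<and> \<one>\<^bsub>G\<^esub> \<in> U \<longrightarrow>
     (\<exists>\<gamma>. \<gamma> \<lesssim> K \<and> (\<forall>V\<in>\<gamma>. openin T V \<and> \<one>\<^bsub>G\<^esub> \<in> V) \<and>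
        (\<forall>x\<in>carrier G. \<exists>V\<in>\<gamma>. (\<lambda>v. x \<otimes>\<^bsub>G\<^esub> v \<otimes>\<^bsub>G\<^esub> inv\<^bsub>G\<^esub> x) ` V \<subseteq> U)))"

definition continuous_action ::
    "('a, 'b) monoid_scheme \<Rightarrow> 'a topology \<Rightarrow> 'x topology \<Rightarrow> ('a \<Rightarrow> 'x \<Rightarrow> 'x) \<Rightarrow> bool" where
  "continuous_action G TG X act \<longleftrightarrow>
     (\<forall>x\<in>topspace X. act \<one>\<^bsub>G\<^esub> x = x)
   \<and> (\<forall>g\<in>carrier G. \<forall>h\<in>carrier G. \<forall>x\<in>topspace X. act (g \<otimes>\<^bsub>G\<^esub> h) x = act g (act h x))
   \<and> continuous_map (prod_topology TG X) X (\<lambda>p. act (fst p) (snd p))"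

definition effective_action :: "('a, 'b) monoid_scheme \<Rightarrow> 'x topology \<Rightarrow> ('a \<Rightarrow> 'x \<Rightarrow> 'x) \<Rightarrow> bool" where
  "effective_action G X act \<longleftrightarrow>
     (\<forall>g\<in>carrier G. (\<forall>x\<in>topspace X. act g x = x) \<longrightarrow> g = \<one>\<^bsub>G\<^esub>)"

definition transitive_action :: "('a, 'b) monoid_scheme \<Rightarrow> 'x topology \<Rightarrow> ('a \<Rightarrow> 'x \<Rightarrow> 'x) \<Rightarrow> bool" where
  "transitive_action G X act \<longleftrightarrow>
     (\<forall>x\<in>topspace X. (\<lambda>g. act g x) ` carrier G = topspace X)"

end

theory Submission
  imports Defs
begin

lemma UN_lepoll_infinite:
  assumes "infinite K" "I \<lesssim> K" "\<And>i. i\<in>I \<Longrightarrow> A i \<lesssim> K"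
  shows "(\<Union>i\<in>I. A i) \<lesssim> K"
  using assms card_of_UNION_ordLeq_infinite[of K I A] by (simp add: lepoll_def card_of_ordLeq)

theorem corollary3p10:
  fixes K :: "'k set" and X :: "'x topology"
  assumes "infinite K"
    and "tychonoff_space X"
    and "character_le X K"
  shows "\<not> (\<exists>(G :: ('g, 'b) monoid_scheme) TG (act :: 'g \<Rightarrow> 'x \<Rightarrow> 'x).
              topological_group G TG \<and> tychonoff_space TG
            \<and> continuous_action G TG X act \<and> effective_action G X act \<and> transitive_action G X act
            \<and> \<not> pseudocharacter_le TG K \<and> invariance_le G TG K)"
proof
  assume "\<exists>(G :: ('g, 'b) monoid_scheme) TG (act :: 'g \<Rightarrow> 'x \<Rightarrow> 'x).
              topological_group G TG \<and> tychonoff_space TG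
            \<and> continuous_action G TG X act \<and> effective_action G X act \<and> transitive_action G X act
            \<and> \<not> pseudocharacter_le TG K \<and> invariance_le G TG K"
  then obtain G :: "('g, 'b) monoid_scheme" and TG and act :: "'g \<Rightarrow> 'x \<Rightarrow> 'x"
    where TGg: "topological_group G TG" and ca: "continuous_action G TG X act"
      and eff: "effective_action G X act" and tr: "transitive_action G X act"
      and npsi: "\<not> pseudocharacter_le TG K" and invl: "invariance_le G TG K"
    by blast
  have grp: "group G" and top: "topspace TG = carrier G"
    and cmul: "continuous_map (prod_topology TG TG) TG (\<lambda>p. fst p \<otimes>\<^bsub>G\<^esub> snd p)"
    using TGg unfolding topological_group_def by auto
  interpret G: group G by (rule grp)
  have act1: "\<And>x. x \<in> topspace X \<Longrightarrow> act \<one>\<^bsub>G\<^esub> x = x"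
    and actm: "\<And>g h x. g \<in> carrier G \<Longrightarrow> h \<in> carrier G \<Longrightarrow> x \<in> topspace X \<Longrightarrow>
         act (g \<otimes>\<^bsub>G\<^esub> h) x = act g (act h x)"
    and cact: "continuous_map (prod_topology TG X) X (\<lambda>p. act (fst p) (snd p))"
    using ca unfolding continuous_action_def by auto
  have actX: "act g x \<in> topspace X" if "g \<in> carrier G" "x \<in> topspace X" for g x
    using continuous_map_image_subset_topspace[OF cact] that top by (force simp: image_subset_iff)
  have t1: "t1_space X" using assms(2) unfolding tychonoff_space_def by auto
  obtain F where Fle: "F \<lesssim> K" and Fopen: "\<forall>V\<in>F. openin TG V \<and> \<one>\<^bsub>G\<^esub> \<in> V"
    and Fsep: "\<And>g. g \<in> carrier G \<Longrightarrow> (\<forall>V\<in>F. g \<in> V) \<Longrightarrow> g = \<one>\<^bsub>G\<^esub>"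
  proof (cases "topspace X = {}")
    case True
    show ?thesis
    proof (rule that[of "{}"])
      show "{} \<lesssim> K" by simp
      show "\<And>g. g \<in> carrier G \<Longrightarrow> (\<forall>V\<in>{}. g \<in> V) \<Longrightarrow> g = \<one>\<^bsub>G\<^esub>"
        using eff True unfolding effective_action_def by auto
    qed auto
  next
    case False
    then obtain x0 where x0: "x0 \<in> topspace X" by blast
    obtain B where Ble: "B \<lesssim> K" and Bopen: "\<forall>V\<in>B. openin X V \<and> x0 \<in> V"
      and Bbase: "\<forall>U. openin X U \<and> x0 \<in> U \<longrightarrow> (\<exists>V\<in>B. V \<subseteq> U)"
      using assms(3) x0 unfolding character_le_def by metis
    define Ow where "Ow W = {g \<in> topspace TG. act g x0 \<in> W}" for W
    have corb: "continuous_map TG X (\<lambda>g. act g x0)"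
    proof -
      have "continuous_map TG (prod_topology TG X) (\<lambda>g. (g, x0))"
        using x0 by (simp add: continuous_map_paired)
      from continuous_map_compose[OF this cact] show ?thesis by (simp add: o_def)
    qed
    have Oopen: "openin TG (Ow W) \<and> \<one>\<^bsub>G\<^esub> \<in> Ow W" if "W \<in> B" for W
      using openin_continuous_map_preimage[OF corb, of W] Bopen that act1[OF x0] top
      unfolding Ow_def by auto
    have "\<forall>W\<in>B. \<exists>\<gamma>. \<gamma> \<lesssim> K \<and> (\<forall>V\<in>\<gamma>. openin TG V \<and> \<one>\<^bsub>G\<^esub> \<in> V) \<and>
        (\<forall>x\<in>carrier G. \<exists>V\<in>\<gamma>. (\<lambda>v. x \<otimes>\<^bsub>G\<^esub> v \<otimes>\<^bsub>G\<^esub> inv\<^bsub>G\<^esub> x) ` V \<subseteq> Ow W)"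
      using invl Oopen unfolding invariance_le_def by blast
    then obtain \<gamma> where \<gamma>: "\<And>W. W \<in> B \<Longrightarrow> \<gamma> W \<lesssim> K \<and> (\<forall>V\<in>\<gamma> W. openin TG V \<and> \<one>\<^bsub>G\<^esub> \<in> V) \<and>
        (\<forall>x\<in>carrier G. \<exists>V\<in>\<gamma> W. (\<lambda>v. x \<otimes>\<^bsub>G\<^esub> v \<otimes>\<^bsub>G\<^esub> inv\<^bsub>G\<^esub> x) ` V \<subseteq> Ow W)"
      by metis
    show ?thesis
    proof (rule that[of "\<Union>W\<in>B. \<gamma> W"])
      show "(\<Union>W\<in>B. \<gamma> W) \<lesssim> K"
        using UN_lepoll_infinite[OF assms(1) Ble] \<gamma> by blast
      show "\<forall>V\<in>(\<Union>W\<in>B. \<gamma> W). openin TG V \<and> \<one>\<^bsub>G\<^esub> \<in> V" using \<gamma> by blast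
      fix g assume g: "g \<in> carrier G" and gin: "\<forall>V\<in>(\<Union>W\<in>B. \<gamma> W). g \<in> V"
      have fix0: "act k x0 = x0" if k: "k \<in> carrier G" and kin: "\<forall>W\<in>B. act k x0 \<in> W" for k
      proof (rule ccontr)
        assume ne: "act k x0 \<noteq> x0"
        obtain U where "openin X U" "x0 \<in> U" "act k x0 \<notin> U"
          using t1 ne x0 actX[OF k x0] unfolding t1_space_def by metis
        then obtain W where "W \<in> B" "W \<subseteq> U" using Bbase by metis
        then show False using kin \<open>act k x0 \<notin> U\<close> by auto
      qed
      show "g = \<one>\<^bsub>G\<^esub>"
        using eff g unfolding effective_action_def
      proof (elim ballE impE)
        show "\<forall>x\<in>topspace X. act g x = x"
        proof
          fix y assume y: "y \<in> topspace X"
          then obtain h where h: "h \<in> carrier G" and yh: "y = act h x0"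
            using tr x0 unfolding transitive_action_def by blast
          define k where "k = inv\<^bsub>G\<^esub> h \<otimes>\<^bsub>G\<^esub> g \<otimes>\<^bsub>G\<^esub> inv\<^bsub>G\<^esub> (inv\<^bsub>G\<^esub> h)"
          have k: "k \<in> carrier G" using g h unfolding k_def by auto
          have "\<forall>W\<in>B. act k x0 \<in> W"
          proof
            fix W assume W: "W \<in> B"
            then obtain V where V: "V \<in> \<gamma> W"
              and sub: "(\<lambda>v. inv\<^bsub>G\<^esub> h \<otimes>\<^bsub>G\<^esub> v \<otimes>\<^bsub>G\<^esub> inv\<^bsub>G\<^esub> (inv\<^bsub>G\<^esub> h)) ` V \<subseteq> Ow W"
              using \<gamma>[OF W] h by (meson G.inv_closed)
            have "g \<in> V" using gin V W by blast
            then have "k \<in> Ow W" using sub unfolding k_def by blast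
            then show "act k x0 \<in> W" unfolding Ow_def by auto
          qed
          then have kx: "act k x0 = x0" using fix0 k by blast
          have kk: "k = inv\<^bsub>G\<^esub> h \<otimes>\<^bsub>G\<^esub> (g \<otimes>\<^bsub>G\<^esub> h)"
            using g h unfolding k_def by (simp add: G.m_assoc)
          have "act h x0 = act h (act k x0)" using kx by simp
          also have "\<dots> = act (h \<otimes>\<^bsub>G\<^esub> k) x0" using actm[OF h k x0] by simp
          also have "h \<otimes>\<^bsub>G\<^esub> k = g \<otimes>\<^bsub>G\<^esub> h"
            using g h unfolding kk by (simp add: G.m_assoc[symmetric] G.r_inv)
          also have "act (g \<otimes>\<^bsub>G\<^esub> h) x0 = act g (act h x0)" using actm[OF g h x0] .
          finally show "act g y = y" using yh by simp
        qed
      qed auto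
    qed
  qed
  have "pseudocharacter_le TG K"
    unfolding pseudocharacter_le_def
  proof
    fix a assume a: "a \<in> topspace TG"
    then have aG: "a \<in> carrier G" using top by simp
    have cl: "continuous_map TG TG (\<lambda>y. inv\<^bsub>G\<^esub> a \<otimes>\<^bsub>G\<^esub> y)"
    proof -
      have "continuous_map TG (prod_topology TG TG) (\<lambda>y. (inv\<^bsub>G\<^esub> a, y))"
        using aG top by (simp add: continuous_map_paired)
      from continuous_map_compose[OF this cmul] show ?thesis by (simp add: o_def)
    qed
    have img: "(\<lambda>v. a \<otimes>\<^bsub>G\<^esub> v) ` V = {y \<in> topspace TG. inv\<^bsub>G\<^esub> a \<otimes>\<^bsub>G\<^esub> y \<in> V}"
      if V: "V \<in> F" for V
    proof -
      have Vc: "V \<subseteq> carrier G" using Fopen V openin_subset top by metis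
      show ?thesis
      proof (rule equalityI; rule subsetI)
        fix y assume "y \<in> (\<lambda>v. a \<otimes>\<^bsub>G\<^esub> v) ` V"
        then obtain v where "v \<in> V" "y = a \<otimes>\<^bsub>G\<^esub> v" by auto
        then show "y \<in> {y \<in> topspace TG. inv\<^bsub>G\<^esub> a \<otimes>\<^bsub>G\<^esub> y \<in> V}"
          using Vc aG top by (auto simp: G.m_assoc[symmetric])
      next
        fix y assume "y \<in> {y \<in> topspace TG. inv\<^bsub>G\<^esub> a \<otimes>\<^bsub>G\<^esub> y \<in> V}"
        then have y: "y \<in> carrier G" "inv\<^bsub>G\<^esub> a \<otimes>\<^bsub>G\<^esub> y \<in> V" using top by auto
        have "y = a \<otimes>\<^bsub>G\<^esub> (inv\<^bsub>G\<^esub> a \<otimes>\<^bsub>G\<^esub> y)"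
          using y aG by (simp add: G.m_assoc[symmetric])
        then show "y \<in> (\<lambda>v. a \<otimes>\<^bsub>G\<^esub> v) ` V" using y by blast
      qed
    qed
    show "\<exists>\<gamma>. \<gamma> \<lesssim> K \<and> (\<forall>V\<in>\<gamma>. openin TG V \<and> a \<in> V) \<and> topspace TG \<inter> \<Inter>\<gamma> = {a}"
    proof (intro exI conjI)
      show "(\<lambda>V. (\<lambda>v. a \<otimes>\<^bsub>G\<^esub> v) ` V) ` F \<lesssim> K"
        using image_lepoll Fle lepoll_trans by blast
      show "\<forall>V\<in>(\<lambda>V. (\<lambda>v. a \<otimes>\<^bsub>G\<^esub> v) ` V) ` F. openin TG V \<and> a \<in> V"
      proof
        fix V' assume "V' \<in> (\<lambda>V. (\<lambda>v. a \<otimes>\<^bsub>G\<^esub> v) ` V) ` F"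
        then obtain V where V: "V \<in> F" and V': "V' = (\<lambda>v. a \<otimes>\<^bsub>G\<^esub> v) ` V" by auto
        have "openin TG V'" unfolding V' img[OF V]
          using openin_continuous_map_preimage[OF cl] Fopen V by blast
        moreover have "a \<in> V'" using V Fopen aG unfolding V' by force
        ultimately show "openin TG V' \<and> a \<in> V'" by blast
      qed
      show "topspace TG \<inter> \<Inter>((\<lambda>V. (\<lambda>v. a \<otimes>\<^bsub>G\<^esub> v) ` V) ` F) = {a}"
      proof (rule equalityI; rule subsetI)
        fix y assume y: "y \<in> topspace TG \<inter> \<Inter>((\<lambda>V. (\<lambda>v. a \<otimes>\<^bsub>G\<^esub> v) ` V) ` F)"
        then have yc: "y \<in> carrier G" using top by auto
        have "\<forall>V\<in>F. inv\<^bsub>G\<^esub> a \<otimes>\<^bsub>G\<^esub> y \<in> V"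
        proof
          fix V assume V: "V \<in> F"
          have "y \<in> (\<lambda>v. a \<otimes>\<^bsub>G\<^esub> v) ` V" using y V by blast
          then show "inv\<^bsub>G\<^esub> a \<otimes>\<^bsub>G\<^esub> y \<in> V" unfolding img[OF V] by blast
        qed
        then have "inv\<^bsub>G\<^esub> a \<otimes>\<^bsub>G\<^esub> y = \<one>\<^bsub>G\<^esub>" using Fsep yc aG G.inv_closed G.m_closed by blast
        then have "y = a" using yc aG
          by (metis G.inv_closed G.inv_inv G.inv_equality)
        then show "y \<in> {a}" by simp
      next
        fix y assume "y \<in> {a}"
        then have ya: "y = a" by simp
        have "\<forall>V\<in>F. a \<in> (\<lambda>v. a \<otimes>\<^bsub>G\<^esub> v) ` V"
        proof
          fix V assume "V \<in> F"
          then have "\<one>\<^bsub>G\<^esub> \<in> V" using Fopen by blast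
          moreover have "a = a \<otimes>\<^bsub>G\<^esub> \<one>\<^bsub>G\<^esub>" using aG by simp
          ultimately show "a \<in> (\<lambda>v. a \<otimes>\<^bsub>G\<^esub> v) ` V" by (rule rev_image_eqI)
        qed
        then show "y \<in> topspace TG \<inter> \<Inter>((\<lambda>V. (\<lambda>v. a \<otimes>\<^bsub>G\<^esub> v) ` V) ` F)"
          using a ya by blast
      qed
    qed
  qed
  with npsi show False by contradiction
qed

end
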